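(* For cycles we have $f^-(C_3)=f^-(C_5)=0$, and for every odd $n\ge 7$, $f^-(C_n)=n-5$.
   Context: All graphs are finite, simple, undirected and connected. $N[v]=N(v)\cup\{v\}$ is the closed neighbourhood. A chromatic colouring of $G$ is a proper vertex colouring $c:V(G)\to\{c_1,\dots,c_{\chi(G)}\}$. With respect to $c$, a vertex $v$ yields a rainbow neighbourhood if $N[v]$ contains a vertex of each colour $c_1,\dots,c_{\chi(G)}$; $r_\chi(G)$ is the number of such vertices, and $r^-_\chi(G)$, $r^+_\chi(G)$ are its minimum and maximum over all chromatic colourings of $G$. Fading: for a set $F\subseteq V(G)$ (a fade set), the vertices of $F$ receive a transparent colour $c^\circ$ not among $c_1,\dots,c_{\chi(G)}$; after fading, $v$ yields a rainbow neighbourhood iff for every $i$ some vertex of $N[v]\setminus F$ has colour $c_i$. The fading number $f^-(G)$ is the maximum $|F|$ over chromatic colourings $c$ attaining $r_\chi=r^-_\chi(G)$ and fade sets $F$ such that, after fading $F$, the number of vertices yielding rainbow neighbourhoods is still $r^-_\chi(G)$; $f^+(G)$ is defined analogously with $r^+_\chi(G)$. *)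

theory Defs
  imports Main
begin

text \<open>A graph is given by a finite vertex set V and a symmetric irreflexive
adjacency relation E. Colours c_1,...,c_k are represented by the naturals 0,...,k-1.\<close>

definition cnbhd :: "'a set \<Rightarrow> ('a \<Rightarrow> 'a \<Rightarrow> bool) \<Rightarrow> 'a \<Rightarrow> 'a set" where
  "cnbhd V E v = {u \<in> V. u = v \<or> E v u}"

definition proper_colouring :: "'a set \<Rightarrow> ('a \<Rightarrow> 'a \<Rightarrow> bool) \<Rightarrow> nat \<Rightarrow> ('a \<Rightarrow> nat) \<Rightarrow> bool" where
  "proper_colouring V E k c \<longleftrightarrow> (\<forall>v\<in>V. c v < k) \<and> (\<forall>u\<in>V. \<forall>v\<in>V. E u v \<longrightarrow> c u \<noteq> c v)"

definition chromatic_number :: "'a set \<Rightarrow> ('a \<Rightarrow> 'a \<Rightarrow> bool) \<Rightarrow> nat" where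
  "chromatic_number V E = (LEAST k. \<exists>c. proper_colouring V E k c)"

definition chromatic_colouring :: "'a set \<Rightarrow> ('a \<Rightarrow> 'a \<Rightarrow> bool) \<Rightarrow> ('a \<Rightarrow> nat) \<Rightarrow> bool" where
  "chromatic_colouring V E c \<longleftrightarrow> proper_colouring V E (chromatic_number V E) c"

definition rainbow_faded :: "'a set \<Rightarrow> ('a \<Rightarrow> 'a \<Rightarrow> bool) \<Rightarrow> ('a \<Rightarrow> nat) \<Rightarrow> 'a set \<Rightarrow> 'a \<Rightarrow> bool" where
  "rainbow_faded V E c F v \<longleftrightarrow>
     (\<forall>i < chromatic_number V E. \<exists>u \<in> cnbhd V E v - F. c u = i)"

definition rainbow_count :: "'a set \<Rightarrow> ('a \<Rightarrow> 'a \<Rightarrow> bool) \<Rightarrow> ('a \<Rightarrow> nat) \<Rightarrow> 'a set \<Rightarrow> nat" where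
  "rainbow_count V E c F = card {v \<in> V. rainbow_faded V E c F v}"

definition r_minus :: "'a set \<Rightarrow> ('a \<Rightarrow> 'a \<Rightarrow> bool) \<Rightarrow> nat" where
  "r_minus V E = Min {rainbow_count V E c {} | c. chromatic_colouring V E c}"

definition fading_minus :: "'a set \<Rightarrow> ('a \<Rightarrow> 'a \<Rightarrow> bool) \<Rightarrow> nat" where
  "fading_minus V E = Max {card F | c F. chromatic_colouring V E c
       \<and> rainbow_count V E c {} = r_minus V E
       \<and> F \<subseteq> V \<and> rainbow_count V E c F = r_minus V E}"

definition cycle_adj :: "nat \<Rightarrow> nat \<Rightarrow> nat \<Rightarrow> bool" where
  "cycle_adj n i j \<longleftrightarrow> i < n \<and> j < n \<and> (j = (i + 1) mod n \<or> i = (j + 1) mod n)"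

end

theory Submission imports Defs begin

lemma ps: "(v::nat) < n \<Longrightarrow> ((v+n-1) mod n + 1) mod n = v"
  by (cases "v = 0") (auto simp: mod_if)
lemma sp: "(v::nat) < n \<Longrightarrow> ((v+1) mod n + n - 1) mod n = v"
proof (cases "v = n - 1")
  case True assume "v < n" with True show ?thesis by simp
next
  case False assume "v < n" with False have "v+1 < n" by simp
  then show ?thesis by simp
qed

lemma adj_iff: "(u::nat) < n \<Longrightarrow> v < n \<Longrightarrow> (v = (u+1) mod n) \<longleftrightarrow> (u = (v+n-1) mod n)"
  using ps sp by metis

lemma nb: assumes "3 \<le> n" "v < n"
  shows "cnbhd {0..<n} (cycle_adj n) v = {(v+n-1) mod n, v, (v+1) mod n}"
proof -
  have "n > 0" using assms by simp
  show ?thesis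
  proof (rule set_eqI)
    fix u
    have "u \<in> cnbhd {0..<n} (cycle_adj n) v \<longleftrightarrow> u < n \<and> (u = v \<or> (v < n \<and> u < n \<and> (u = (v+1) mod n \<or> v = (u+1) mod n)))"
      by (simp add: cnbhd_def cycle_adj_def)
    also have "\<dots> \<longleftrightarrow> u = (v+n-1) mod n \<or> u = v \<or> u = (v+1) mod n"
      using adj_iff[of u n v] assms \<open>n>0\<close> by auto
    finally show "u \<in> cnbhd {0..<n} (cycle_adj n) v \<longleftrightarrow> u \<in> {(v+n-1) mod n, v, (v+1) mod n}" by simp
  qed
qed

lemma no2col:
  assumes "odd (n::nat)" "3 \<le> n" "\<forall>i<n. c i \<in> {A,B}" "\<forall>i<n. c ((i+1) mod n) \<noteq> c i"
  shows False
proof -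
  define o1 where "o1 = (if c 0 = A then B else A)"
  have "\<forall>i<n. c i = (if even i then c 0 else o1)"
  proof
    fix i show "i < n \<longrightarrow> c i = (if even i then c 0 else o1)"
    proof (induction i)
      case 0 then show ?case by simp
    next
      case (Suc i)
      show ?case
      proof
        assume "Suc i < n"
        have m: "(i+1) mod n = Suc i" using \<open>Suc i < n\<close> by simp
        have "c ((i+1) mod n) \<noteq> c i" using assms(4) Suc_lessD[OF \<open>Suc i < n\<close>] by blast
        then have "c (Suc i) \<noteq> c i" "c (Suc i) \<in> {A,B}" "c i \<in> {A,B}" "c 0 \<in> {A,B}" using m assms(3) \<open>Suc i < n\<close> by auto
        then show "c (Suc i) = (if even (Suc i) then c 0 else o1)"
          using Suc \<open>Suc i < n\<close> unfolding o1_def by auto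
      qed
    qed
  qed
  note all = this
  have "even (n-1)" "n - 1 < n" using assms by auto
  then have "c (n-1) = c 0" using all[rule_format, of "n-1"] by simp
  moreover have "c (((n-1)+1) mod n) \<noteq> c (n-1)" using assms(4) \<open>n - 1 < n\<close> by blast
  moreover have "((n-1)+1) mod n = 0" using assms(2) by simp
  ultimately show False by simp
qed
lemma three: "(x::nat) < 3 \<Longrightarrow> y<3 \<Longrightarrow> z<3 \<Longrightarrow> x\<noteq>y \<Longrightarrow> y\<noteq>z \<Longrightarrow> (\<forall>i<3. i = x \<or> i = y \<or> i = z) \<longleftrightarrow> x \<noteq> z"
  by (auto simp: less_Suc_eq numeral_eq_Suc)

lemma modsuc2: "(i::nat) mod 2 \<noteq> Suc i mod 2" by presburger


lemma fade_mono: "rainbow_faded V E c F v \<Longrightarrow> rainbow_faded V E c {} v"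
  unfolding rainbow_faded_def by blast

lemma fade_irrel: "cnbhd V E v \<inter> F = {} \<Longrightarrow> rainbow_faded V E c F v = rainbow_faded V E c {} v"
  unfolding rainbow_faded_def by (simp add: Diff_triv)

lemma card3le: "card {a, b, c} \<le> 3"
  by (simp add: card_insert_if)

definition c0 :: "nat \<Rightarrow> nat \<Rightarrow> nat" where
  "c0 n i = (if i = n - 1 then 2 else i mod 2)"

context fixes n :: nat assumes oddn: "odd n" and n3: "3 \<le> n"
begin

lemma proper_next: "proper_colouring {0..<n} (cycle_adj n) k c \<Longrightarrow> i < n \<Longrightarrow> c ((i+1) mod n) \<noteq> c i"
proof -
  assume c: "proper_colouring {0..<n} (cycle_adj n) k c" and i: "i < n"
  have "(i+1) mod n < n" using i by simp
  moreover have "cycle_adj n i ((i+1) mod n)" using i \<open>(i+1) mod n < n\<close> unfolding cycle_adj_def by simp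
  moreover have "\<forall>u\<in>{0..<n}. \<forall>v\<in>{0..<n}. cycle_adj n u v \<longrightarrow> c u \<noteq> c v"
    using c unfolding proper_colouring_def by blast
  ultimately have "c i \<noteq> c ((i+1) mod n)" using i by simp
  then show ?thesis by simp
qed

lemma c0_next: "i < n \<Longrightarrow> c0 n i \<noteq> c0 n ((i+1) mod n)"
proof -
  assume i: "i < n"
  consider "i = n - 1" | "i = n - 2" | "i + 2 < n" using i by linarith
  then show ?thesis
  proof cases
    case 1 then show ?thesis using n3 by (simp add: c0_def)
  next
    case 2
    have "odd (n-2)" using oddn n3 by simp
    then have "(n-2) mod 2 = 1" by presburger
    then show ?thesis using 2 n3 by (simp add: c0_def)
  next
    case 3 then have "i \<noteq> n - 1" "i + 1 \<noteq> n - 1" "(i+1) mod n = i + 1" by auto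
    then show ?thesis using modsuc2[of i] by (simp add: c0_def)
  qed
qed

lemma proper_c0: "proper_colouring {0..<n} (cycle_adj n) 3 (c0 n)"
  unfolding proper_colouring_def
proof (intro conjI ballI impI)
  fix v assume "v \<in> {0..<n}" have "v mod 2 < 3" by (rule less_trans[OF mod_less_divisor]) simp_all
  then show "c0 n v < 3" by (simp add: c0_def)
next
  fix u v assume "u \<in> {0..<n}" "v \<in> {0..<n}" "cycle_adj n u v"
  then have "u < n" "v < n" "v = (u+1) mod n \<or> u = (v+1) mod n" unfolding cycle_adj_def by auto
  then consider "v = (u+1) mod n" | "u = (v+1) mod n" by blast
  then show "c0 n u \<noteq> c0 n v"
  proof cases
    case 1 then show ?thesis using c0_next[OF \<open>u<n\<close>] by simp
  next
    case 2 then show ?thesis using c0_next[OF \<open>v<n\<close>] by simp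
  qed
qed

lemma chi3: "chromatic_number {0..<n} (cycle_adj n) = 3"
  unfolding chromatic_number_def
proof (rule Least_equality)
  show "\<exists>c. proper_colouring {0..<n} (cycle_adj n) 3 c" using proper_c0 by blast
next
  fix k assume "\<exists>c. proper_colouring {0..<n} (cycle_adj n) k c"
  then obtain c where c: "proper_colouring {0..<n} (cycle_adj n) k c" by blast
  show "3 \<le> k"
  proof (rule ccontr)
    assume "\<not> 3 \<le> k"
    have "\<forall>i<n. c i \<in> {0,1}"
    proof (intro allI impI)
      fix i assume "i < n"
      then have "c i < k" using c unfolding proper_colouring_def by auto
      then show "c i \<in> {0,1}" using \<open>\<not> 3 \<le> k\<close> by auto
    qed
    moreover have "\<forall>i<n. c ((i+1) mod n) \<noteq> c i" using proper_next[OF c] by blast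
    ultimately show False using no2col[OF oddn n3, of c 0 1] by simp
  qed
qed

lemma chrom_iff: "chromatic_colouring {0..<n} (cycle_adj n) c \<longleftrightarrow> proper_colouring {0..<n} (cycle_adj n) 3 c"
  unfolding chromatic_colouring_def chi3 ..

lemma rb_iff:
  assumes c: "proper_colouring {0..<n} (cycle_adj n) 3 c" and v: "v < n"
  shows "rainbow_faded {0..<n} (cycle_adj n) c {} v \<longleftrightarrow> c ((v+n-1) mod n) \<noteq> c ((v+1) mod n)"
proof -
  let ?p = "(v+n-1) mod n" and ?s = "(v+1) mod n"
  have n0: "n > 0" using n3 by simp
  have lt: "?p < n" "?s < n" using n0 by auto
  have "c ?s \<noteq> c v" using proper_next[OF c v] .
  moreover have "c v \<noteq> c ?p" using proper_next[OF c lt(1)] ps[OF v] by simp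
  moreover have "c v < 3" "c ?p < 3" "c ?s < 3" using c lt v unfolding proper_colouring_def by auto
  ultimately have eq: "(\<forall>i<3. i = c ?p \<or> i = c v \<or> i = c ?s) \<longleftrightarrow> c ?p \<noteq> c ?s"
    using three[of "c ?p" "c v" "c ?s"] by simp
  have "rainbow_faded {0..<n} (cycle_adj n) c {} v \<longleftrightarrow> (\<forall>i<3. i = c ?p \<or> i = c v \<or> i = c ?s)"
    unfolding rainbow_faded_def chi3 nb[OF n3 v] Diff_empty by blast
  with eq show ?thesis by simp
qed


lemma rb_lower:
  assumes c: "proper_colouring {0..<n} (cycle_adj n) 3 c"
  shows "3 \<le> card {v\<in>{0..<n}. rainbow_faded {0..<n} (cycle_adj n) c {} v}"
proof (rule ccontr)
  define R where "R = {v\<in>{0..<n}. rainbow_faded {0..<n} (cycle_adj n) c {} v}"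
  assume "\<not> 3 \<le> card {v\<in>{0..<n}. rainbow_faded {0..<n} (cycle_adj n) c {} v}"
  then have le2: "card R \<le> 2" unfolding R_def by simp
  have fin: "finite R" unfolding R_def by simp
  have "\<exists>a b. R \<subseteq> {a,b}"
  proof -
    consider "card R = 0" | "card R = 1" | "card R = 2" using le2 by linarith
    then show ?thesis
    proof cases
      case 1 then have "R = {}" using fin by simp
      then show ?thesis by blast
    next
      case 2 then obtain a where "R = {a}" by (rule card_1_singletonE)
      then show ?thesis by blast
    next
      case 3 then obtain a b where "R = {a,b}" by (meson card_2_iff)
      then show ?thesis by blast
    qed
  qed
  then obtain a b where ab: "R \<subseteq> {a,b}" by blast
  define x where "x = (a+1) mod n"
  have xn: "x < n" using n3 by (simp add: x_def)
  have inv: "\<forall>m. c ((x + 2*m) mod n) \<in> {c ((a+1) mod n), c ((b+1) mod n)}"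
  proof
    fix m show "c ((x + 2*m) mod n) \<in> {c ((a+1) mod n), c ((b+1) mod n)}"
    proof (induction m)
      case 0 show ?case using xn by (simp add: x_def)
    next
      case (Suc m)
      define p where "p = (x + 2*m) mod n"
      have pn: "p < n" using n3 by (simp add: p_def)
      have e: "(x + 2*Suc m) mod n = (p + 2) mod n" unfolding p_def mod_add_left_eq by simp
      define q where "q = (p+1) mod n"
      have qn: "q < n" using n3 by (simp add: q_def)
      have qp: "(q + n - 1) mod n = p" using sp[OF pn] q_def by simp
      have qs: "(q+1) mod n = (p+2) mod n" unfolding q_def mod_add_left_eq by simp
      show ?case
      proof (cases "q \<in> R")
        case True then have "q = a \<or> q = b" using ab by blast
        then have "(x + 2*Suc m) mod n = (a+1) mod n \<or> (x + 2*Suc m) mod n = (b+1) mod n" using qs e by auto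
        then show ?thesis by auto
      next
        case False then have "\<not> rainbow_faded {0..<n} (cycle_adj n) c {} q" using qn unfolding R_def by simp
        then have "c ((q+n-1) mod n) = c ((q+1) mod n)" using rb_iff[OF c qn] by simp
        then have "c ((p+2) mod n) = c p" using qp qs by simp
        then show ?thesis using Suc.IH e p_def by simp
      qed
    qed
  qed
  have all: "\<forall>j<n. c j \<in> {c ((a+1) mod n), c ((b+1) mod n)}"
  proof (intro allI impI)
    fix j assume j: "j < n"
    define k where "k = j + n - x"
    have xk: "x + k = j + n" using xn k_def by simp
    have h: "2 * ((n+1) div 2) = n + 1" using oddn by presburger
    have "x + 2*(k*((n+1) div 2)) = x + k*(n+1)" using h by (metis mult.left_commute)
    also have "\<dots> = j + (k+1)*n" using xk by (simp add: algebra_simps)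
    finally have "(x + 2*(k*((n+1) div 2))) mod n = (j + (k+1)*n) mod n" by simp
    also have "\<dots> = j" using j by (metis mod_less mod_mult_self1)
    finally have "(x + 2*(k*((n+1) div 2))) mod n = j" .
    moreover have "c ((x + 2*(k*((n+1) div 2))) mod n) \<in> {c ((a+1) mod n), c ((b+1) mod n)}" using inv by blast
    ultimately show "c j \<in> {c ((a+1) mod n), c ((b+1) mod n)}" by simp
  qed
  have "\<forall>i<n. c ((i+1) mod n) \<noteq> c i" using proper_next[OF c] by blast
  then show False by (rule no2col[OF oddn n3 all])
qed


lemma mods: "(0+n-1) mod n = n - 1" "(0+1) mod n = 1"
  "(n-1+n-1) mod n = n - 2" "(n-1+1) mod n = 0"
  "(n-2+n-1) mod n = n - 3" "(n-2+1) mod n = n - 1"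
proof -
  show "(0+n-1) mod n = n - 1" "(0+1) mod n = 1" "(n-1+1) mod n = 0" "(n-2+1) mod n = n - 1"
    using n3 by auto
  have "n-1+n-1 = (n-2) + 1*n" using n3 by simp
  then show "(n-1+n-1) mod n = n - 2" using n3 by (metis mod_less mod_mult_self1 diff_less zero_less_numeral order_less_le_trans zero_less_two)
  have "n-2+n-1 = (n-3) + 1*n" using n3 by simp
  then show "(n-2+n-1) mod n = n - 3" using n3 by (metis mod_less mod_mult_self1 diff_less zero_less_numeral order_less_le_trans)
qed

lemma mid_mods: "1 \<le> v \<Longrightarrow> v + 3 \<le> n \<Longrightarrow> (v+n-1) mod n = v - 1 \<and> (v+1) mod n = v + 1"
proof -
  assume a: "1 \<le> v" "v + 3 \<le> n"
  have "v+n-1 = (v-1) + 1*n" using a by simp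
  moreover have "v - 1 < n" using a by simp
  ultimately have "(v+n-1) mod n = v - 1" by (metis mod_less mod_mult_self1)
  moreover have "(v+1) mod n = v+1" using a by simp
  ultimately show ?thesis by simp
qed

lemma c0_pair: "v < n \<Longrightarrow> (c0 n ((v+n-1) mod n) \<noteq> c0 n ((v+1) mod n)) \<longleftrightarrow> (v = n-2 \<or> v = n-1 \<or> v = 0)"
proof -
  assume v: "v < n"
  have odd2: "(n-2) mod 2 = 1" using oddn n3 by presburger
  have ev3: "(n-3) mod 2 = 0" using oddn n3 by presburger
  consider "v = 0" | "v = n - 1" | "v = n - 2" | "1 \<le> v \<and> v + 3 \<le> n" using v by linarith
  then show ?thesis
  proof cases
    case 1 then show ?thesis using mods n3 by (simp add: c0_def)
  next
    case 2 then show ?thesis using mods n3 odd2 by (simp add: c0_def)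
  next
    case 3
    have "n-3 \<noteq> n-1" using n3 by arith
    then show ?thesis using 3 mods n3 ev3 by (simp add: c0_def)
  next
    case 4
    then have m: "(v+n-1) mod n = v - 1" "(v+1) mod n = v + 1" using mid_mods by auto
    have "v + 1 = (v-1) + 2" using 4 by simp
    then have "(v-1) mod 2 = (v+1) mod 2" by (metis mod_add_self2)
    moreover have "v-1 \<noteq> n-1" "v+1 \<noteq> n-1" "v \<noteq> n-2" "v \<noteq> n-1" "v \<noteq> 0" using 4 by arith+
    ultimately show ?thesis using m by (simp add: c0_def)
  qed
qed

lemma c0_R: "{v\<in>{0..<n}. rainbow_faded {0..<n} (cycle_adj n) (c0 n) {} v} = {n-2, n-1, 0}"
proof -
  have "\<And>v. v < n \<Longrightarrow> rainbow_faded {0..<n} (cycle_adj n) (c0 n) {} v \<longleftrightarrow> (v = n-2 \<or> v = n-1 \<or> v = 0)"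
  proof -
    fix v assume v: "v < n"
    show "rainbow_faded {0..<n} (cycle_adj n) (c0 n) {} v \<longleftrightarrow> (v = n-2 \<or> v = n-1 \<or> v = 0)"
      by (simp only: rb_iff[OF proper_c0 v] c0_pair[OF v])
  qed
  then show ?thesis using n3 by auto
qed

lemma card_c0_R: "card {n-2, n-1, (0::nat)} = 3"
  using n3 by simp

lemma rc_le: "rainbow_count {0..<n} (cycle_adj n) c F \<le> n"
proof -
  have "card {v\<in>{0..<n}. rainbow_faded {0..<n} (cycle_adj n) c F v} \<le> card {0..<n}"
    by (rule card_mono) auto
  then show ?thesis unfolding rainbow_count_def by simp
qed

lemma r_minus3: "r_minus {0..<n} (cycle_adj n) = 3"
  unfolding r_minus_def
proof (rule Min_eqI)
  show "finite {rainbow_count {0..<n} (cycle_adj n) c {} |c. chromatic_colouring {0..<n} (cycle_adj n) c}"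
    by (rule finite_subset[of _ "{0..n}"]) (use rc_le in auto)
next
  fix y assume "y \<in> {rainbow_count {0..<n} (cycle_adj n) c {} |c. chromatic_colouring {0..<n} (cycle_adj n) c}"
  then obtain c where "y = rainbow_count {0..<n} (cycle_adj n) c {}" "chromatic_colouring {0..<n} (cycle_adj n) c" by blast
  then show "3 \<le> y" using rb_lower chrom_iff unfolding rainbow_count_def by simp
next
  have "rainbow_count {0..<n} (cycle_adj n) (c0 n) {} = 3"
    unfolding rainbow_count_def c0_R using card_c0_R .
  moreover have "chromatic_colouring {0..<n} (cycle_adj n) (c0 n)" using chrom_iff proper_c0 by simp
  ultimately show "3 \<in> {rainbow_count {0..<n} (cycle_adj n) c {} |c. chromatic_colouring {0..<n} (cycle_adj n) c}"
    by force
qed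


lemma disj:
  assumes v: "v < n" and rb: "rainbow_faded {0..<n} (cycle_adj n) c F v"
  shows "cnbhd {0..<n} (cycle_adj n) v \<inter> F = {}"
proof (rule ccontr)
  let ?N = "cnbhd {0..<n} (cycle_adj n) v"
  assume "?N \<inter> F \<noteq> {}"
  then obtain u where u: "u \<in> ?N" "u \<in> F" by blast
  have fin: "finite ?N" unfolding nb[OF n3 v] by simp
  have cN: "card ?N \<le> 3" unfolding nb[OF n3 v] by (rule card3le)
  have "{0,1,2} \<subseteq> c ` (?N - F)"
  proof
    fix i :: nat assume "i \<in> {0,1,2}"
    then have "i < chromatic_number {0..<n} (cycle_adj n)" using chi3 by auto
    then obtain w where "w \<in> ?N - F" "c w = i" using rb unfolding rainbow_faded_def by blast
    then show "i \<in> c ` (?N - F)" by blast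
  qed
  then have "card {0,1,2::nat} \<le> card (c ` (?N - F))" by (rule card_mono[rotated]) (use fin in simp)
  also have "\<dots> \<le> card (?N - F)" by (rule card_image_le) (use fin in simp)
  also have "\<dots> \<le> card (?N - {u})" by (rule card_mono) (use fin u in auto)
  also have "\<dots> = card ?N - 1" using u fin by simp
  finally show False using cN by simp
qed

lemma grow:
  assumes X: "X \<subseteq> {0..<n}" "X \<noteq> {}"
  shows "min (card X + 1) n \<le> card (X \<union> (\<lambda>x. (x+1) mod n) ` X)"
proof -
  let ?s = "\<lambda>x. (x+1) mod n"
  have finX: "finite X" using X finite_subset by blast
  have fin: "finite (X \<union> ?s ` X)" using finX by simp
  show ?thesis
  proof (cases "?s ` X \<subseteq> X")
    case True
    obtain x0 where x0: "x0 \<in> X" using X by blast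
    have x0n: "x0 < n" using x0 X by auto
    have inv: "\<forall>m. (x0 + m) mod n \<in> X"
    proof
      fix m show "(x0 + m) mod n \<in> X"
      proof (induction m)
        case 0 show ?case using x0 x0n by simp
      next
        case (Suc m)
        have e: "(x0 + Suc m) mod n = ?s ((x0 + m) mod n)" unfolding mod_add_left_eq by simp
        have "?s ((x0 + m) mod n) \<in> ?s ` X" using Suc.IH by (rule imageI)
        then have "?s ((x0 + m) mod n) \<in> X" using True by (rule subsetD[rotated])
        then show ?case unfolding e .
      qed
    qed
    have "{0..<n} \<subseteq> X"
    proof
      fix j assume "j \<in> {0..<n}"
      then have j: "j < n" by simp
      have eq: "(x0 + (j + n - x0)) mod n = j" using j x0n by simp
      have mem: "(x0 + (j + n - x0)) mod n \<in> X" using inv by blast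
      show "j \<in> X" using mem unfolding eq .
    qed
    then have "card {0..<n} \<le> card X" by (rule card_mono[OF finX])
    then have "n \<le> card X" by simp
    also have "card X \<le> card (X \<union> ?s ` X)" by (rule card_mono[OF fin]) blast
    finally show ?thesis by simp
  next
    case False
    then obtain y where y: "y \<in> ?s ` X" "y \<notin> X" by blast
    have "card X + 1 = card (insert y X)" using finX y by simp
    also have "\<dots> \<le> card (X \<union> ?s ` X)" by (rule card_mono[OF fin]) (use y in blast)
    finally show ?thesis by simp
  qed
qed

lemma cardU:
  assumes R: "R \<subseteq> {0..<n}" "card R = 3"
  shows "min 5 n \<le> card (\<Union>v\<in>R. cnbhd {0..<n} (cycle_adj n) v)"
proof -
  let ?s = "\<lambda>x. (x+1) mod n" and ?p = "\<lambda>x. (x+n-1) mod n"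
  have n0: "n > 0" using n3 by simp
  have sn: "\<And>x. ?s x < n" using n0 by simp
  have pn: "\<And>x. ?p x < n" using n0 by simp
  define X1 where "X1 = R \<union> ?s ` R"
  define X2 where "X2 = X1 \<union> ?s ` X1"
  have Rne: "R \<noteq> {}" using R by auto
  have X1V: "X1 \<subseteq> {0..<n}" unfolding X1_def using R sn by auto
  have c1: "min 4 n \<le> card X1" unfolding X1_def using grow[OF R(1) Rne] R(2) by simp
  have c2: "min (card X1 + 1) n \<le> card X2" unfolding X2_def by (rule grow[OF X1V]) (use Rne X1_def in blast)
  have c2': "min 5 n \<le> card X2" using c1 c2 by linarith
  have U: "(\<Union>v\<in>R. cnbhd {0..<n} (cycle_adj n) v) = ?p ` X2"
  proof
    show "(\<Union>v\<in>R. cnbhd {0..<n} (cycle_adj n) v) \<subseteq> ?p ` X2"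
    proof
      fix u assume "u \<in> (\<Union>v\<in>R. cnbhd {0..<n} (cycle_adj n) v)"
      then obtain v where v: "v \<in> R" "u \<in> cnbhd {0..<n} (cycle_adj n) v" by blast
      have vn: "v < n" using v R by auto
      have "u = ?p v \<or> u = v \<or> u = ?s v" using v(2) nb[OF n3 vn] by auto
      have vX1: "v \<in> X1" using v(1) unfolding X1_def by (rule UnI1)
      then have vX2: "v \<in> X2" unfolding X2_def by (rule UnI1)
      have svX1: "?s v \<in> X1" unfolding X1_def using imageI[OF v(1), of ?s] by (rule UnI2)
      then have svX2: "?s v \<in> X2" unfolding X2_def by (rule UnI1)
      have ssvX2: "?s (?s v) \<in> X2" unfolding X2_def using imageI[OF svX1, of ?s] by (rule UnI2)
      have a1: "?p v \<in> ?p ` X2" using vX2 by (rule imageI)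
      have e2: "?p (?s v) = v" using sp[OF vn] .
      have "?p (?s v) \<in> ?p ` X2" using svX2 by (rule imageI)
      then have a2: "v \<in> ?p ` X2" unfolding e2 .
      have e3: "?p (?s (?s v)) = ?s v" using sp[OF sn] .
      have "?p (?s (?s v)) \<in> ?p ` X2" using ssvX2 by (rule imageI)
      then have a3: "?s v \<in> ?p ` X2" unfolding e3 .
      show "u \<in> ?p ` X2" using \<open>u = ?p v \<or> u = v \<or> u = ?s v\<close> a1 a2 a3 by blast
    qed
  next
    show "?p ` X2 \<subseteq> (\<Union>v\<in>R. cnbhd {0..<n} (cycle_adj n) v)"
    proof
      fix u assume "u \<in> ?p ` X2"
      then obtain y where y: "y \<in> X2" "u = ?p y" by blast
      have N: "\<And>v. v \<in> R \<Longrightarrow> cnbhd {0..<n} (cycle_adj n) v = {?p v, v, ?s v}"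
        using nb[OF n3] R by auto
      have "y \<in> R \<or> (\<exists>r\<in>R. y = ?s r) \<or> (\<exists>r\<in>R. y = ?s (?s r))"
        using y(1) unfolding X2_def X1_def by blast
      then show "u \<in> (\<Union>v\<in>R. cnbhd {0..<n} (cycle_adj n) v)"
      proof (elim disjE bexE)
        assume "y \<in> R" then show ?thesis using y N by blast
      next
        fix r assume r: "r \<in> R" "y = ?s r"
        have "r < n" using r R by auto
        then have "u = r" using y r sp by simp
        then show ?thesis using r N by blast
      next
        fix r assume r: "r \<in> R" "y = ?s (?s r)"
        then have "u = ?s r" using y r sp[OF sn] by simp
        then show ?thesis using r N by blast
      qed
    qed
  qed
  have inj: "inj_on ?p X2"
  proof (rule inj_onI)
    fix x y assume "x \<in> X2" "y \<in> X2" "?p x = ?p y"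
    moreover have "X2 \<subseteq> {0..<n}" unfolding X2_def using X1V sn by auto
    ultimately have "x < n" "y < n" "?s (?p x) = ?s (?p y)" by auto
    then show "x = y" using ps by metis
  qed
  show ?thesis unfolding U card_image[OF inj] using c2' .
qed


lemma upper:
  assumes c: "chromatic_colouring {0..<n} (cycle_adj n) c"
    and r0: "rainbow_count {0..<n} (cycle_adj n) c {} = r_minus {0..<n} (cycle_adj n)"
    and F: "F \<subseteq> {0..<n}"
    and rF: "rainbow_count {0..<n} (cycle_adj n) c F = r_minus {0..<n} (cycle_adj n)"
  shows "card F \<le> n - 5"
proof -
  define R0 where "R0 = {v\<in>{0..<n}. rainbow_faded {0..<n} (cycle_adj n) c {} v}"
  define RF where "RF = {v\<in>{0..<n}. rainbow_faded {0..<n} (cycle_adj n) c F v}"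
  have cR0: "card R0 = 3" using r0 r_minus3 unfolding rainbow_count_def R0_def by simp
  have cRF: "card RF = 3" using rF r_minus3 unfolding rainbow_count_def RF_def by simp
  have sub: "RF \<subseteq> R0" unfolding RF_def R0_def using fade_mono[of "{0..<n}" "cycle_adj n" c F] by blast
  have finR0: "finite R0" unfolding R0_def by simp
  have eq: "RF = R0" using card_subset_eq[OF finR0 sub] cR0 cRF by simp
  have R0V: "R0 \<subseteq> {0..<n}" unfolding R0_def by blast
  define U where "U = (\<Union>v\<in>R0. cnbhd {0..<n} (cycle_adj n) v)"
  have UV: "U \<subseteq> {0..<n}" unfolding U_def cnbhd_def by blast
  have disjU: "F \<inter> U = {}"
  proof -
    have "\<And>v. v \<in> R0 \<Longrightarrow> cnbhd {0..<n} (cycle_adj n) v \<inter> F = {}"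
    proof -
      fix v assume v: "v \<in> R0"
      then have "v \<in> RF" using eq by simp
      then have "v < n" "rainbow_faded {0..<n} (cycle_adj n) c F v" unfolding RF_def by auto
      then show "cnbhd {0..<n} (cycle_adj n) v \<inter> F = {}" by (rule disj)
    qed
    then show ?thesis unfolding U_def by blast
  qed
  have finU: "finite U" using UV finite_subset by blast
  have "F \<subseteq> {0..<n} - U" using F disjU by blast
  then have "card F \<le> card ({0..<n} - U)" by (rule card_mono[rotated]) simp
  also have "\<dots> = n - card U" using card_Diff_subset[OF finU UV] by simp
  finally have "card F \<le> n - card U" .
  moreover have "min 5 n \<le> card U" unfolding U_def by (rule cardU[OF R0V cR0])
  ultimately show ?thesis using n3 by linarith
qed

lemma attain:
  "n - 5 \<in> {card F | c F. chromatic_colouring {0..<n} (cycle_adj n) c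
       \<and> rainbow_count {0..<n} (cycle_adj n) c {} = r_minus {0..<n} (cycle_adj n)
       \<and> F \<subseteq> {0..<n} \<and> rainbow_count {0..<n} (cycle_adj n) c F = r_minus {0..<n} (cycle_adj n)}"
proof -
  define F0 where "F0 = {2..<n-3}"
  have cF0: "card F0 = n - 5" unfolding F0_def by simp
  have F0V: "F0 \<subseteq> {0..<n}" unfolding F0_def by auto
  have ch: "chromatic_colouring {0..<n} (cycle_adj n) (c0 n)" using chrom_iff proper_c0 by simp
  have r0: "rainbow_count {0..<n} (cycle_adj n) (c0 n) {} = 3"
    unfolding rainbow_count_def c0_R using card_c0_R .
  have n2: "n - 2 < n" "n - 1 < n" "0 < n" using n3 by auto
  have N1: "cnbhd {0..<n} (cycle_adj n) (n-2) = {n-3, n-2, n-1}"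
    using nb[OF n3 n2(1)] mods by simp
  have N2: "cnbhd {0..<n} (cycle_adj n) (n-1) = {n-2, n-1, 0}"
    using nb[OF n3 n2(2)] mods by simp
  have N3: "cnbhd {0..<n} (cycle_adj n) 0 = {n-1, 0, 1}"
  proof -
    have "(n - 1) mod n = n - 1" using n3 by simp
    then show ?thesis using nb[OF n3 n2(3)] n3 by simp
  qed
  have disjF0: "\<And>v. v \<in> {n-2, n-1, 0} \<Longrightarrow> cnbhd {0..<n} (cycle_adj n) v \<inter> F0 = {}"
  proof -
    fix v assume "v \<in> {n-2, n-1, (0::nat)}"
    then consider "v = n-2" | "v = n-1" | "v = 0" by blast
    then show "cnbhd {0..<n} (cycle_adj n) v \<inter> F0 = {}"
    proof cases
      case 1 show ?thesis unfolding 1 N1 F0_def by auto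
    next
      case 2 show ?thesis unfolding 2 N2 F0_def by auto
    next
      case 3 show ?thesis unfolding 3 N3 F0_def by auto
    qed
  qed
  have "{v\<in>{0..<n}. rainbow_faded {0..<n} (cycle_adj n) (c0 n) F0 v}
      = {v\<in>{0..<n}. rainbow_faded {0..<n} (cycle_adj n) (c0 n) {} v}"
  proof (rule Collect_cong)
    fix v
    show "(v \<in> {0..<n} \<and> rainbow_faded {0..<n} (cycle_adj n) (c0 n) F0 v) =
          (v \<in> {0..<n} \<and> rainbow_faded {0..<n} (cycle_adj n) (c0 n) {} v)"
    proof (cases "v \<in> {n-2, n-1, 0}")
      case True then show ?thesis using fade_irrel[OF disjF0[OF True]] by simp
    next
      case False
      then have "v \<notin> {v\<in>{0..<n}. rainbow_faded {0..<n} (cycle_adj n) (c0 n) {} v}" unfolding c0_R .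
      then have "\<not> (v \<in> {0..<n} \<and> rainbow_faded {0..<n} (cycle_adj n) (c0 n) {} v)" by simp
      then show ?thesis using fade_mono[of "{0..<n}" "cycle_adj n" "c0 n" F0 v] by blast
    qed
  qed
  then have rF: "rainbow_count {0..<n} (cycle_adj n) (c0 n) F0 = 3"
    using r0 unfolding rainbow_count_def by simp
  show ?thesis unfolding mem_Collect_eq
    apply (rule exI[of _ "c0 n"], rule exI[of _ F0])
    using ch r0 rF F0V cF0 r_minus3 by simp
qed

lemma fading_main: "fading_minus {0..<n} (cycle_adj n) = n - 5"
  unfolding fading_minus_def
proof (rule Max_eqI)
  show "finite {card F | c F. chromatic_colouring {0..<n} (cycle_adj n) c
       \<and> rainbow_count {0..<n} (cycle_adj n) c {} = r_minus {0..<n} (cycle_adj n)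
       \<and> F \<subseteq> {0..<n} \<and> rainbow_count {0..<n} (cycle_adj n) c F = r_minus {0..<n} (cycle_adj n)}"
  proof (rule finite_subset[of _ "{0..n}"])
    show "{card F | c F. chromatic_colouring {0..<n} (cycle_adj n) c
       \<and> rainbow_count {0..<n} (cycle_adj n) c {} = r_minus {0..<n} (cycle_adj n)
       \<and> F \<subseteq> {0..<n} \<and> rainbow_count {0..<n} (cycle_adj n) c F = r_minus {0..<n} (cycle_adj n)} \<subseteq> {0..n}"
    proof
      fix y assume "y \<in> {card F | c F. chromatic_colouring {0..<n} (cycle_adj n) c
       \<and> rainbow_count {0..<n} (cycle_adj n) c {} = r_minus {0..<n} (cycle_adj n)
       \<and> F \<subseteq> {0..<n} \<and> rainbow_count {0..<n} (cycle_adj n) c F = r_minus {0..<n} (cycle_adj n)}"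
      then obtain F where "y = card F" "F \<subseteq> {0..<n}" by blast
      then have "y \<le> card {0..<n}" using card_mono by blast
      then show "y \<in> {0..n}" by simp
    qed
  qed simp
next
  fix y assume "y \<in> {card F | c F. chromatic_colouring {0..<n} (cycle_adj n) c
       \<and> rainbow_count {0..<n} (cycle_adj n) c {} = r_minus {0..<n} (cycle_adj n)
       \<and> F \<subseteq> {0..<n} \<and> rainbow_count {0..<n} (cycle_adj n) c F = r_minus {0..<n} (cycle_adj n)}"
  then obtain c F where "y = card F" "chromatic_colouring {0..<n} (cycle_adj n) c"
       "rainbow_count {0..<n} (cycle_adj n) c {} = r_minus {0..<n} (cycle_adj n)"
       "F \<subseteq> {0..<n}" "rainbow_count {0..<n} (cycle_adj n) c F = r_minus {0..<n} (cycle_adj n)" by blast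
  then show "y \<le> n - 5" using upper by simp
next
  show "n - 5 \<in> {card F | c F. chromatic_colouring {0..<n} (cycle_adj n) c
       \<and> rainbow_count {0..<n} (cycle_adj n) c {} = r_minus {0..<n} (cycle_adj n)
       \<and> F \<subseteq> {0..<n} \<and> rainbow_count {0..<n} (cycle_adj n) c F = r_minus {0..<n} (cycle_adj n)}"
    by (rule attain)
qed

end

theorem proposition2p2:
  shows "fading_minus {0..<3} (cycle_adj 3) = 0
       \<and> fading_minus {0..<5} (cycle_adj 5) = 0
       \<and> (\<forall>n::nat. odd n \<and> n \<ge> 7 \<longrightarrow> fading_minus {0..<n} (cycle_adj n) = n - 5)"
proof (intro conjI allI impI)
  show "fading_minus {0..<3} (cycle_adj 3) = 0" using fading_main[of 3] by simp
  show "fading_minus {0..<5} (cycle_adj 5) = 0" using fading_main[of 5] by simp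
  fix n :: nat assume "odd n \<and> n \<ge> 7"
  then show "fading_minus {0..<n} (cycle_adj n) = n - 5" using fading_main[of n] by simp
qed

end
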